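(* Let $(R,\mathfrak{m})$ be a $d$-dimensional local ring of prime characteristic $p>0$, let $I$ be an $\mathfrak{m}$-primary ideal, and let $J=(x_1,\ldots,x_d)$ be a minimal reduction of $I$ generated by a system of parameters. For $q=p^e$ let $\mathcal{R}'_q=R[I^{[q]}t,t^{-1}]$ be the extended Rees algebra of $I^{[q]}$ and $J_q=(x_1^qt,\ldots,x_d^qt)\subseteq\mathcal{R}'_q$; write $\mathcal{R}'=\mathcal{R}'_1$. Then $a(H^d_{J_q}(\mathcal{R}'_q))\leq a(H^d_{J_1}(\mathcal{R}'))$ for all $q=p^e$.
   Context: $I^{[q]}=(x^q\mid x\in I)$. The local cohomology modules $H^d_{J_q}(\mathcal{R}'_q)$ are $\mathbb{Z}$-graded with the grading induced by $\deg t=1$. For a $\mathbb{Z}$-graded module $M$, $a(M)=\sup\{n\in\mathbb{Z}\mid M_n\neq0\}$. *)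

theory Defs
  imports "HOL-Computational_Algebra.Formal_Laurent_Series" "HOL-Library.Extended_Real"
begin

section \<open>Ideals of a commutative ring (the ring is the whole type)\<close>

definition is_ideal :: "'a::comm_ring_1 set \<Rightarrow> bool" where
  "is_ideal I \<longleftrightarrow> 0 \<in> I \<and> (\<forall>a\<in>I. \<forall>b\<in>I. a + b \<in> I) \<and> (\<forall>r. \<forall>a\<in>I. r * a \<in> I)"

definition ideal_gen :: "'a::comm_ring_1 set \<Rightarrow> 'a set" where
  "ideal_gen X = {x. \<forall>I. is_ideal I \<and> X \<subseteq> I \<longrightarrow> x \<in> I}"

definition ideal_prod :: "'a::comm_ring_1 set \<Rightarrow> 'a set \<Rightarrow> 'a set" where
  "ideal_prod I J = ideal_gen {a * b | a b. a \<in> I \<and> b \<in> J}"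

fun ideal_pow :: "'a::comm_ring_1 set \<Rightarrow> nat \<Rightarrow> 'a set" where
  "ideal_pow I 0 = UNIV"
| "ideal_pow I (Suc n) = ideal_prod I (ideal_pow I n)"

definition frob_pow :: "'a::comm_ring_1 set \<Rightarrow> nat \<Rightarrow> 'a set" where
  "frob_pow I q = ideal_gen {x ^ q | x. x \<in> I}"

definition radical :: "'a::comm_ring_1 set \<Rightarrow> 'a set" where
  "radical I = {x. \<exists>n. x ^ n \<in> I}"

definition is_prime_ideal :: "'a::comm_ring_1 set \<Rightarrow> bool" where
  "is_prime_ideal P \<longleftrightarrow> is_ideal P \<and> P \<noteq> UNIV \<and> (\<forall>a b. a * b \<in> P \<longrightarrow> a \<in> P \<or> b \<in> P)"

definition is_maximal_ideal :: "'a::comm_ring_1 set \<Rightarrow> bool" where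
  "is_maximal_ideal M \<longleftrightarrow> is_ideal M \<and> M \<noteq> UNIV \<and>
     (\<forall>J. is_ideal J \<and> M \<subseteq> J \<longrightarrow> J = M \<or> J = UNIV)"

definition noetherian_ring :: "'a::comm_ring_1 itself \<Rightarrow> bool" where
  "noetherian_ring _ \<longleftrightarrow> (\<forall>I::'a set. is_ideal I \<longrightarrow> (\<exists>X. finite X \<and> I = ideal_gen X))"

definition local_ring :: "'a::comm_ring_1 set \<Rightarrow> bool" where
  "local_ring m \<longleftrightarrow> noetherian_ring TYPE('a) \<and> is_maximal_ideal m \<and>
     (\<forall>M. is_maximal_ideal M \<longrightarrow> M = m)"

definition prime_chain :: "'a::comm_ring_1 itself \<Rightarrow> nat \<Rightarrow> bool" where
  "prime_chain _ n \<longleftrightarrow> (\<exists>P :: nat \<Rightarrow> 'a set. (\<forall>i\<le>n. is_prime_ideal (P i)) \<and> (\<forall>i<n. P i \<subset> P (Suc i)))"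

definition krull_dim_eq :: "'a::comm_ring_1 itself \<Rightarrow> nat \<Rightarrow> bool" where
  "krull_dim_eq T d \<longleftrightarrow> prime_chain T d \<and> \<not> prime_chain T (Suc d)"

definition primary_to :: "'a::comm_ring_1 set \<Rightarrow> 'a set \<Rightarrow> bool" where
  "primary_to m I \<longleftrightarrow> is_ideal I \<and> I \<noteq> UNIV \<and> radical I = m"

definition is_reduction :: "'a::comm_ring_1 set \<Rightarrow> 'a set \<Rightarrow> bool" where
  "is_reduction J I \<longleftrightarrow> is_ideal J \<and> J \<subseteq> I \<and>
     (\<exists>n. ideal_prod J (ideal_pow I n) = ideal_pow I (Suc n))"

definition is_minimal_reduction :: "'a::comm_ring_1 set \<Rightarrow> 'a set \<Rightarrow> bool" where
  "is_minimal_reduction J I \<longleftrightarrow> is_reduction J I \<and> (\<forall>K. is_reduction K I \<and> K \<subseteq> J \<longrightarrow> K = J)"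

definition system_of_parameters :: "'a::comm_ring_1 set \<Rightarrow> nat \<Rightarrow> (nat \<Rightarrow> 'a) \<Rightarrow> bool" where
  "system_of_parameters m d x \<longleftrightarrow> krull_dim_eq TYPE('a) d \<and> primary_to m (ideal_gen (x ` {..<d}))"

text \<open>R[It,t^-1] = direct sum over n in Z of I^n t^n (I^n = R for n \<le> 0), as a subring of
  the Laurent polynomials R[t,t^-1] (Laurent series with finite support).\<close>
definition ext_rees :: "'a::comm_ring_1 set \<Rightarrow> 'a fls set" where
  "ext_rees I = {f. finite {n. fls_nth f n \<noteq> 0} \<and>
                    (\<forall>n::int. n \<ge> 0 \<longrightarrow> fls_nth f n \<in> ideal_pow I (nat n))}"

text \<open>For y_0..y_{d-1} in a ring S (a subring of type 'b), H^d_{(y)}(S) is the cokernel of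
  the last Cech map: S_Y modulo the sum of the images of S_{Y/y_j}, with Y = prod y_j.
  The class of s/Y^k is zero iff s/Y^k = sum_j b_j/(Y/y_j)^m in S_Y for some m and b_j in S.\<close>
definition cech_top_class_zero :: "'b::comm_ring_1 set \<Rightarrow> (nat \<Rightarrow> 'b) \<Rightarrow> nat \<Rightarrow> 'b \<Rightarrow> nat \<Rightarrow> bool" where
  "cech_top_class_zero S y d s k \<longleftrightarrow>
     (let Y = (\<Prod>j<d. y j) in
      \<exists>m N (b :: nat \<Rightarrow> 'b). (\<forall>j<d. b j \<in> S) \<and>
        Y ^ N * (s * Y ^ m - Y ^ k * (\<Sum>j<d. b j * y j ^ m)) = 0)"

text \<open>Graded component of degree n of H^d_{(y)}(S), for S a graded subring of R[t,t^-1]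
  (grading by deg t = 1) and y_j homogeneous of degree 1: it is nonzero iff some
  homogeneous fraction s/Y^k of degree n (s of degree n + d k) has nonzero class.\<close>
definition cech_top_component_nonzero :: "'a::comm_ring_1 fls set \<Rightarrow> (nat \<Rightarrow> 'a fls) \<Rightarrow> nat \<Rightarrow> int \<Rightarrow> bool" where
  "cech_top_component_nonzero S y d n \<longleftrightarrow>
     (\<exists>k::nat. \<exists>c::'a.
        fls_const c * fls_X_intpow (n + int (d * k)) \<in> S \<and>
        \<not> cech_top_class_zero S y d (fls_const c * fls_X_intpow (n + int (d * k))) k)"

text \<open>a-invariant: sup of degrees of nonzero components (in extended reals, sup of empty = -\<infinity>).\<close>
definition a_inv_top :: "'a::comm_ring_1 fls set \<Rightarrow> (nat \<Rightarrow> 'a fls) \<Rightarrow> nat \<Rightarrow> ereal" where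
  "a_inv_top S y d = Sup {ereal (real_of_int n) | n. cech_top_component_nonzero S y d n}"

definition Jq_gens :: "(nat \<Rightarrow> 'a::comm_ring_1) \<Rightarrow> nat \<Rightarrow> nat \<Rightarrow> 'a fls" where
  "Jq_gens x q i = fls_const (x i ^ q) * fls_X_intpow 1"

end

theory Submission
  imports Defs "HOL-Computational_Algebra.Primes"
begin

lemma ideal_gen_is_ideal: "is_ideal (ideal_gen X)"
  unfolding is_ideal_def ideal_gen_def by auto

lemma ideal_gen_sup: "X \<subseteq> ideal_gen X"
  unfolding ideal_gen_def by auto

lemma ideal_gen_least: "is_ideal I \<Longrightarrow> X \<subseteq> I \<Longrightarrow> ideal_gen X \<subseteq> I"
  unfolding ideal_gen_def by auto

lemma ideal_gen_induct: "a \<in> ideal_gen X \<Longrightarrow> is_ideal T \<Longrightarrow> X \<subseteq> T \<Longrightarrow> a \<in> T"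
  using ideal_gen_least by blast

lemma ideal_gen_induct': "X \<subseteq> T \<Longrightarrow> a \<in> ideal_gen X \<Longrightarrow> is_ideal T \<Longrightarrow> a \<in> T"
  by (rule ideal_gen_induct)

lemma is_ideal_UNIV: "is_ideal UNIV"
  unfolding is_ideal_def by auto

lemma ideal_pow_ideal: "is_ideal (ideal_pow I n)"
  by (cases n) (auto simp: is_ideal_UNIV ideal_prod_def ideal_gen_is_ideal)

lemma ideal_0: "is_ideal I \<Longrightarrow> 0 \<in> I" unfolding is_ideal_def by auto
lemma ideal_add: "is_ideal I \<Longrightarrow> a \<in> I \<Longrightarrow> b \<in> I \<Longrightarrow> a + b \<in> I" unfolding is_ideal_def by auto
lemma ideal_multL: "is_ideal I \<Longrightarrow> a \<in> I \<Longrightarrow> r * a \<in> I" unfolding is_ideal_def by auto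

lemma is_idealI: "0 \<in> T \<Longrightarrow> (\<And>a c. a \<in> T \<Longrightarrow> c \<in> T \<Longrightarrow> a + c \<in> T) \<Longrightarrow> (\<And>r a. a \<in> T \<Longrightarrow> r * a \<in> T) \<Longrightarrow> is_ideal T"
  unfolding is_ideal_def by blast
lemma ideal_multR: "is_ideal I \<Longrightarrow> a \<in> I \<Longrightarrow> a * r \<in> I" unfolding is_ideal_def by (metis mult.commute)

lemma pow_Suc_in: "u \<in> I \<Longrightarrow> v \<in> ideal_pow I n \<Longrightarrow> u * v \<in> ideal_pow I (Suc n)"
  unfolding ideal_pow.simps ideal_prod_def by (rule ideal_gen_sup[THEN subsetD]) blast

lemma ideal_pow_mult:
  "a \<in> ideal_pow I A \<Longrightarrow> b \<in> ideal_pow I B \<Longrightarrow> a * b \<in> ideal_pow I (A + B)"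
proof (induction A arbitrary: a)
  case 0
  then show ?case by (simp add: ideal_multL ideal_pow_ideal)
next
  case (Suc A)
  let ?T = "{a. a * b \<in> ideal_pow I (Suc A + B)}"
  have II: "is_ideal (ideal_pow I (Suc A + B))" by (rule ideal_pow_ideal)
  have T: "is_ideal ?T"
  proof (rule is_idealI)
    show "0 \<in> ?T" using ideal_0[OF II] by simp
  next
    fix a c assume "a \<in> ?T" "c \<in> ?T"
    thus "a + c \<in> ?T" using ideal_add[OF II] by (simp add: distrib_right)
  next
    fix r a assume "a \<in> ?T"
    thus "r * a \<in> ?T" using ideal_multL[OF II] by (simp add: mult.assoc)
  qed
  have "{u * v |u v. u \<in> I \<and> v \<in> ideal_pow I A} \<subseteq> ?T"
  proof
    fix z assume "z \<in> {u * v |u v. u \<in> I \<and> v \<in> ideal_pow I A}"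
    then obtain u v where z: "z = u * v" "u \<in> I" "v \<in> ideal_pow I A" by auto
    have "v * b \<in> ideal_pow I (A + B)" using Suc.IH z(3) Suc.prems(2) by blast
    hence "u * (v * b) \<in> ideal_pow I (Suc (A + B))"
      using z(2) pow_Suc_in by blast
    thus "z \<in> ?T" using z by (simp add: mult.assoc)
  qed
  moreover have "a \<in> ideal_gen {u * v |u v. u \<in> I \<and> v \<in> ideal_pow I A}"
    using Suc.prems(1) by (simp add: ideal_prod_def)
  ultimately have "a \<in> ?T" by (rule ideal_gen_induct'[OF _ _ T])
  then show ?case by simp
qed

lemma ideal_pow_Suc_sub: "ideal_pow I (Suc n) \<subseteq> ideal_pow I n"
  unfolding ideal_pow.simps ideal_prod_def
  by (rule ideal_gen_least[OF ideal_pow_ideal]) (auto intro: ideal_multL ideal_pow_ideal)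

lemma ideal_pow_anti: "A \<le> B \<Longrightarrow> ideal_pow I B \<subseteq> ideal_pow I A"
  by (rule lift_Suc_antimono_le[of "ideal_pow I"], rule ideal_pow_Suc_sub, assumption)

lemma prod_in_pow:
  "finite A \<Longrightarrow> (\<forall>i\<in>A. f i \<in> I) \<Longrightarrow> prod f A \<in> ideal_pow I (card A)"
proof (induction A rule: finite_induct)
  case empty then show ?case by simp
next
  case (insert a A)
  hence "f a \<in> I" "prod f A \<in> ideal_pow I (card A)" by auto
  from pow_Suc_in[OF this] show ?case using insert.hyps by (simp del: ideal_pow.simps)
qed

lemma gen_mult:
  assumes "a \<in> ideal_gen A" "b \<in> ideal_gen B" "is_ideal C" "\<forall>u\<in>A. \<forall>v\<in>B. u * v \<in> C"
  shows "a * b \<in> C"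
proof -
  have 1: "a * v \<in> C" if v: "v \<in> B" for v
  proof -
    have "is_ideal {a. a * v \<in> C}"
    proof (rule is_idealI)
      show "0 \<in> {a. a * v \<in> C}" using ideal_0[OF assms(3)] by simp
    next
      fix a c assume "a \<in> {a. a * v \<in> C}" "c \<in> {a. a * v \<in> C}"
      thus "a + c \<in> {a. a * v \<in> C}" using ideal_add[OF assms(3)] by (simp add: distrib_right)
    next
      fix r a assume "a \<in> {a. a * v \<in> C}"
      thus "r * a \<in> {a. a * v \<in> C}" using ideal_multL[OF assms(3)] by (simp add: mult.assoc)
    qed
    moreover have "A \<subseteq> {a. a * v \<in> C}" using assms(4) v by auto
    ultimately have "a \<in> {a. a * v \<in> C}" by (rule ideal_gen_induct[OF assms(1)])
    thus ?thesis by (rule CollectD)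
  qed
  have "is_ideal {b. a * b \<in> C}"
  proof (rule is_idealI)
    show "0 \<in> {b. a * b \<in> C}" using ideal_0[OF assms(3)] by simp
  next
    fix b c assume "b \<in> {b. a * b \<in> C}" "c \<in> {b. a * b \<in> C}"
    thus "b + c \<in> {b. a * b \<in> C}" using ideal_add[OF assms(3)] by (simp add: distrib_left)
  next
    fix r b assume "b \<in> {b. a * b \<in> C}"
    hence "r * (a * b) \<in> C" using ideal_multL[OF assms(3)] by simp
    thus "r * b \<in> {b. a * b \<in> C}" by (simp add: mult.left_commute[of a r b])
  qed
  moreover have "B \<subseteq> {b. a * b \<in> C}" using 1 by auto
  ultimately have "b \<in> {b. a * b \<in> C}" by (rule ideal_gen_induct[OF assms(2)])
  thus ?thesis by (rule CollectD)
qed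

lemma gen_pow_frob:
  "ideal_pow (frob_pow I q) n \<subseteq> ideal_gen {g ^ q | g. g \<in> ideal_pow I n}"
proof (induction n)
  case 0
  show ?case
  proof
    fix c :: 'a
    have "(1::'a) ^ q \<in> {g ^ q | g. g \<in> ideal_pow I 0}" by (rule CollectI, rule exI[of _ 1]) simp
    hence "(1::'a) ^ q \<in> ideal_gen {g ^ q | g. g \<in> ideal_pow I 0}" by (rule ideal_gen_sup[THEN subsetD])
    hence "c * (1::'a) ^ q \<in> ideal_gen {g ^ q | g. g \<in> ideal_pow I 0}" by (rule ideal_multL[OF ideal_gen_is_ideal])
    thus "c \<in> ideal_gen {g ^ q | g. g \<in> ideal_pow I 0}" by simp
  qed
next
  case (Suc n)
  show ?case unfolding ideal_pow.simps(2)[of "frob_pow I q"] ideal_prod_def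
  proof (rule ideal_gen_least[OF ideal_gen_is_ideal], safe)
    fix a b assume a: "a \<in> frob_pow I q" and b: "b \<in> ideal_pow (frob_pow I q) n"
    have b': "b \<in> ideal_gen {g ^ q | g. g \<in> ideal_pow I n}" using b Suc.IH by blast
    show "a * b \<in> ideal_gen {g ^ q | g. g \<in> ideal_pow I (Suc n)}"
    proof (rule gen_mult[OF a[unfolded frob_pow_def] b' ideal_gen_is_ideal], safe)
      fix u v assume "u \<in> I" "v \<in> ideal_pow I n"
      hence "u * v \<in> ideal_pow I (Suc n)" using pow_Suc_in by blast
      hence "(u * v) ^ q \<in> {g ^ q | g. g \<in> ideal_pow I (Suc n)}" by blast
      hence "(u * v) ^ q \<in> ideal_gen {g ^ q | g. g \<in> ideal_pow I (Suc n)}"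
        by (rule ideal_gen_sup[THEN subsetD])
      thus "u ^ q * v ^ q \<in> ideal_gen {g ^ q | g. g \<in> ideal_pow I (Suc n)}"
        by (simp add: power_mult_distrib)
    qed
  qed
qed

context
  fixes q :: nat and e :: nat
  assumes pc: "prime CHAR('a::comm_ring_1)" and qd: "q = CHAR('a) ^ e"
begin

lemma q_pos: "q > 0" using pc qd prime_gt_0_nat by auto

lemma frob_add: "((a::'a) + b) ^ q = a ^ q + b ^ q"
  using freshmans_dream'[OF pc qd] .

lemma frob_diff: "((a::'a) - b) ^ q = a ^ q - b ^ q"
proof -
  have "a ^ q = ((a - b) + b) ^ q" by simp
  also have "\<dots> = (a - b) ^ q + b ^ q" by (rule frob_add)
  finally show ?thesis by (simp add: algebra_simps)
qed

lemma frob_sum: "(sum (f :: _ \<Rightarrow> 'a) A) ^ q = sum (\<lambda>i. f i ^ q) A"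
  using freshmans_dream_sum'[OF pc qd] .

lemma frob_pow_mem:
  "(g::'a) \<in> ideal_pow I n \<Longrightarrow> g ^ q \<in> ideal_pow (frob_pow I q) n"
proof (induction n arbitrary: g)
  case 0 then show ?case by simp
next
  case (Suc n)
  let ?T = "{g::'a. g ^ q \<in> ideal_pow (frob_pow I q) (Suc n)}"
  have II: "is_ideal (ideal_pow (frob_pow I q) (Suc n))" by (rule ideal_pow_ideal)
  have T: "is_ideal ?T"
  proof (rule is_idealI)
    show "0 \<in> ?T" using ideal_0[OF II] q_pos by (simp add: power_0_left)
  next
    fix a c assume "a \<in> ?T" "c \<in> ?T"
    thus "a + c \<in> ?T" using ideal_add[OF II] by (simp add: frob_add)
  next
    fix r a assume "a \<in> ?T"
    thus "r * a \<in> ?T" using ideal_multL[OF II] by (simp add: power_mult_distrib)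
  qed
  have "{u * v |u v. u \<in> I \<and> v \<in> ideal_pow I n} \<subseteq> ?T"
  proof safe
    fix u v assume u: "u \<in> I" and v: "v \<in> ideal_pow I n"
    have "u ^ q \<in> {x ^ q | x. x \<in> I}" using u by blast
    hence "u ^ q \<in> frob_pow I q" unfolding frob_pow_def by (rule ideal_gen_sup[THEN subsetD])
    moreover have "v ^ q \<in> ideal_pow (frob_pow I q) n" using Suc.IH v by blast
    ultimately have "u ^ q * v ^ q \<in> ideal_pow (frob_pow I q) (Suc n)"
      using pow_Suc_in by blast
    thus "(u * v) ^ q \<in> ideal_pow (frob_pow I q) (Suc n)" by (simp add: power_mult_distrib)
  qed
  moreover have "g \<in> ideal_gen {u * v |u v. u \<in> I \<and> v \<in> ideal_pow I n}"
    using Suc.prems by (simp add: ideal_prod_def)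
  ultimately have "g \<in> ?T" by (rule ideal_gen_induct'[OF _ _ T])
  then show ?case by simp
qed

end

definition lmon :: "'a::comm_ring_1 \<Rightarrow> int \<Rightarrow> 'a fls" where
  "lmon c n = fls_const c * fls_X_intpow n"

lemma lmon_eq: "lmon c n = fls_shift (-n) (fls_const c)"
  by (simp add: lmon_def fls_X_intpow_times_conv_shift)

lemma lmon_nth [simp]: "fls_nth (lmon c n) k = (if k = n then c else 0)"
  unfolding lmon_eq fls_shift_nth fls_const_nth by auto

lemma lmon_times_nth: "fls_nth (lmon a i * f) k = a * fls_nth f (k - i)"
proof -
  have "lmon a i * f = fls_const a * fls_shift (-i) f"
    unfolding lmon_def mult.assoc fls_X_intpow_times_conv_shift(1) ..
  thus ?thesis by (simp only: fls_mult_const_nth fls_shift_nth diff_conv_add_uminus)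
qed

lemma lmon_times_nth2: "fls_nth (f * lmon a i) k = fls_nth f (k - i) * a"
  by (simp add: mult.commute[of f] lmon_times_nth mult.commute[of a])

lemma lmon_mult: "lmon a i * lmon b j = lmon (a * b) (i + j)"
  by (rule fls_eqI) (auto simp: lmon_times_nth)

lemma lmon_1: "lmon 1 0 = 1"
  by (rule fls_eqI) simp

lemma lmon_0 [simp]: "lmon 0 i = 0"
  by (rule fls_eqI) simp

lemma lmon_power: "lmon a i ^ k = lmon (a ^ k) (int k * i)"
  by (induction k) (simp_all add: lmon_1 lmon_mult algebra_simps)

lemma lmon_add: "lmon a i + lmon b i = lmon (a + b) i"
  by (rule fls_eqI) simp

lemma lmon_diff: "lmon a i - lmon b i = lmon (a - b) i"
  by (rule fls_eqI) simp

lemma lmon_sum: "(\<Sum>j\<in>A. lmon (f j) i) = lmon (\<Sum>j\<in>A. f j) i"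
  by (rule fls_eqI) (auto simp: fls_nth_sum)

lemma lmon_prod: "finite A \<Longrightarrow> (\<Prod>j\<in>A. lmon (f j) 1) = lmon (\<Prod>j\<in>A. f j) (int (card A))"
  by (induction A rule: finite_induct) (simp_all add: lmon_1 lmon_mult algebra_simps)

lemma lmon_ext_rees: "lmon c M \<in> ext_rees I \<longleftrightarrow> c \<in> ideal_pow I (nat M)"
proof
  assume "lmon c M \<in> ext_rees I"
  hence "\<forall>n\<ge>0. fls_nth (lmon c M) n \<in> ideal_pow I (nat n)" unfolding ext_rees_def by blast
  thus "c \<in> ideal_pow I (nat M)"
    by (cases "M \<ge> 0") auto
next
  assume c: "c \<in> ideal_pow I (nat M)"
  have "finite {n. fls_nth (lmon c M) n \<noteq> 0}"
    by (rule finite_subset[of _ "{M}"]) auto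
  moreover have "\<forall>n\<ge>0. fls_nth (lmon c M) n \<in> ideal_pow I (nat n)"
    using c ideal_0[OF ideal_pow_ideal] by auto
  ultimately show "lmon c M \<in> ext_rees I" unfolding ext_rees_def by blast
qed

lemma ext_rees_nth: "f \<in> ext_rees I \<Longrightarrow> fls_nth f L \<in> ideal_pow I (nat L)"
  unfolding ext_rees_def by (cases "L \<ge> 0") auto

lemma Jq_gens_lmon: "Jq_gens x q i = lmon (x i ^ q) 1"
  by (simp add: Jq_gens_def lmon_def)

definition Wz :: "'a::comm_ring_1 set \<Rightarrow> (nat \<Rightarrow> 'a) \<Rightarrow> nat \<Rightarrow> nat \<Rightarrow> int \<Rightarrow> nat \<Rightarrow> 'a \<Rightarrow> nat \<Rightarrow> nat \<Rightarrow> bool" where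
  "Wz I' x d q M k c m N \<longleftrightarrow> (\<exists>\<beta>. (\<forall>j<d. \<beta> j \<in> ideal_pow I' (nat (M + int (d*m) - int (d*k) - int m))) \<and>
     (\<Prod>j<d. x j ^ q) ^ N * (c * (\<Prod>j<d. x j ^ q) ^ m - (\<Prod>j<d. x j ^ q) ^ k * (\<Sum>j<d. \<beta> j * (x j ^ q) ^ m)) = 0)"

lemma Y_lmon: "(\<Prod>j<d. Jq_gens x q j) = lmon (\<Prod>j<d. x j ^ q) (int d)"
  by (simp add: Jq_gens_lmon lmon_prod)

lemma cz_to_W:
  assumes "cech_top_class_zero (ext_rees I') (Jq_gens x q) d (lmon c M) k"
  shows "\<exists>m N. Wz I' x d q M k c m N"
proof -
  define P where "P = (\<Prod>j<d. x j ^ q)"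
  from assms obtain m N b where b: "\<forall>j<d. b j \<in> ext_rees I'" and
    eq: "lmon P d ^ N * (lmon c M * lmon P d ^ m - lmon P d ^ k * (\<Sum>j<d. b j * Jq_gens x q j ^ m)) = 0"
    unfolding cech_top_class_zero_def Let_def Y_lmon P_def by blast
  define L where "L = M + int (d*m) - int (d*k) - int m"
  define \<beta> where "\<beta> j = fls_nth (b j) L" for j
  define D where "D = int N * int d + (M + int m * int d)"
  have s: "fls_nth (\<Sum>j<d. b j * Jq_gens x q j ^ m) (M + int m * int d - int k * int d) = (\<Sum>j<d. \<beta> j * (x j ^ q) ^ m)"
    by (simp add: fls_nth_sum Jq_gens_lmon lmon_power lmon_times_nth2 \<beta>_def L_def algebra_simps)
  have "fls_nth (lmon P d ^ N * (lmon c M * lmon P d ^ m - lmon P d ^ k * (\<Sum>j<d. b j * Jq_gens x q j ^ m))) D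
     = P ^ N * (c * P ^ m - P ^ k * fls_nth (\<Sum>j<d. b j * Jq_gens x q j ^ m) (M + int m * int d - int k * int d))"
    unfolding lmon_power lmon_times_nth lmon_mult
    by (simp add: D_def lmon_times_nth algebra_simps)
  also have "\<dots> = P ^ N * (c * P ^ m - P ^ k * (\<Sum>j<d. \<beta> j * (x j ^ q) ^ m))"
    by (simp only: s)
  finally have "fls_nth (lmon P d ^ N * (lmon c M * lmon P d ^ m - lmon P d ^ k * (\<Sum>j<d. b j * Jq_gens x q j ^ m))) D
     = P ^ N * (c * P ^ m - P ^ k * (\<Sum>j<d. \<beta> j * (x j ^ q) ^ m))" .
  hence "P ^ N * (c * P ^ m - P ^ k * (\<Sum>j<d. \<beta> j * (x j ^ q) ^ m)) = 0"
    unfolding eq fls_zero_nth by (rule sym)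
  moreover have "\<forall>j<d. \<beta> j \<in> ideal_pow I' (nat L)" by (simp add: \<beta>_def b ext_rees_nth)
  ultimately have "Wz I' x d q M k c m N" unfolding Wz_def P_def[symmetric] L_def[symmetric] by blast
  thus ?thesis by blast
qed

lemma W_to_cz:
  assumes "Wz I' x d q M k c m N"
  shows "cech_top_class_zero (ext_rees I') (Jq_gens x q) d (lmon c M) k"
proof -
  define P where "P = (\<Prod>j<d. x j ^ q)"
  define L where "L = M + int (d*m) - int (d*k) - int m"
  from assms obtain \<beta> where bm: "\<forall>j<d. \<beta> j \<in> ideal_pow I' (nat L)" and
    eq: "P ^ N * (c * P ^ m - P ^ k * (\<Sum>j<d. \<beta> j * (x j ^ q) ^ m)) = 0"
    unfolding Wz_def P_def L_def by blast
  define b where "b j = lmon (\<beta> j) L" for j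
  have b: "\<forall>j<d. b j \<in> ext_rees I'" using bm by (simp add: b_def lmon_ext_rees)
  have s: "(\<Sum>j<d. b j * Jq_gens x q j ^ m) = lmon (\<Sum>j<d. \<beta> j * (x j ^ q) ^ m) (L + int m)"
    by (simp add: b_def Jq_gens_lmon lmon_power lmon_mult lmon_sum)
  have e1: "lmon P d ^ k * lmon (\<Sum>j<d. \<beta> j * (x j ^ q) ^ m) (L + int m)
      = lmon (P ^ k * (\<Sum>j<d. \<beta> j * (x j ^ q) ^ m)) (M + int m * int d)"
    by (simp add: lmon_power lmon_mult L_def algebra_simps)
  have "lmon P d ^ N * (lmon c M * lmon P d ^ m - lmon P d ^ k * (\<Sum>j<d. b j * Jq_gens x q j ^ m))
     = lmon (P ^ N * (c * P ^ m - P ^ k * (\<Sum>j<d. \<beta> j * (x j ^ q) ^ m))) (int N * int d + (M + int m * int d))"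
  proof -
    have a: "lmon c M * lmon P d ^ m = lmon (c * P ^ m) (M + int m * int d)"
      unfolding lmon_power lmon_mult ..
    show ?thesis
      unfolding s e1 a lmon_diff unfolding lmon_power lmon_mult ..
  qed
  also have "\<dots> = 0" unfolding eq by (rule lmon_0)
  finally have E: "lmon P d ^ N * (lmon c M * lmon P d ^ m - lmon P d ^ k * (\<Sum>j<d. b j * Jq_gens x q j ^ m)) = 0" .
  show ?thesis
    unfolding cech_top_class_zero_def Let_def Y_lmon P_def[symmetric]
    by (rule exI[of _ m], rule exI[of _ N], rule exI[of _ b]) (use b E in blast)
qed

lemma W_N:
  assumes "Wz I' x d q M k c m N"
  shows "Wz I' x d q M k c m (N + r)"
proof -
  define P where "P = (\<Prod>j<d. x j ^ q)"
  from assms obtain \<beta> where bm: "\<forall>j<d. \<beta> j \<in> ideal_pow I' (nat (M + int (d*m) - int (d*k) - int m))" and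
    eq: "P ^ N * (c * P ^ m - P ^ k * (\<Sum>j<d. \<beta> j * (x j ^ q) ^ m)) = 0"
    unfolding Wz_def P_def by blast
  have "P ^ (N + r) * (c * P ^ m - P ^ k * (\<Sum>j<d. \<beta> j * (x j ^ q) ^ m))
      = P ^ r * (P ^ N * (c * P ^ m - P ^ k * (\<Sum>j<d. \<beta> j * (x j ^ q) ^ m)))"
    by (simp only: power_add mult.assoc mult.commute mult.left_commute)
  also have "\<dots> = 0" unfolding eq by simp
  finally have eq2: "P ^ (N + r) * (c * P ^ m - P ^ k * (\<Sum>j<d. \<beta> j * (x j ^ q) ^ m)) = 0" .
  show ?thesis unfolding Wz_def P_def[symmetric]
    by (rule exI[of _ \<beta>]) (use bm eq2 in blast)
qed

lemma W_m:
  assumes xq: "\<forall>i<d. x i ^ q \<in> I'" and W: "Wz I' x d q M k c m N"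
  shows "Wz I' x d q M k c (Suc m) N"
proof -
  define P where "P = (\<Prod>j<d. x j ^ q)"
  define L where "L = M + int (d*m) - int (d*k) - int m"
  from W obtain \<beta> where bm: "\<forall>j<d. \<beta> j \<in> ideal_pow I' (nat L)" and
    eq: "P ^ N * (c * P ^ m - P ^ k * (\<Sum>j<d. \<beta> j * (x j ^ q) ^ m)) = 0"
    unfolding Wz_def P_def L_def by blast
  define \<beta>' where "\<beta>' j = \<beta> j * (\<Prod>i\<in>{..<d}-{j}. x i ^ q)" for j
  have key: "\<beta>' j * (x j ^ q) ^ Suc m = P * (\<beta> j * (x j ^ q) ^ m)" if j: "j < d" for j
  proof -
    have "P = x j ^ q * (\<Prod>i\<in>{..<d}-{j}. x i ^ q)"
      unfolding P_def using j by (simp add: prod.remove)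
    thus ?thesis unfolding \<beta>'_def by (simp add: ac_simps)
  qed
  have sum: "(\<Sum>j<d. \<beta>' j * (x j ^ q) ^ Suc m) = P * (\<Sum>j<d. \<beta> j * (x j ^ q) ^ m)"
    unfolding sum_distrib_left
  proof (rule sum.cong[OF refl])
    fix j assume "j \<in> {..<d}"
    hence "j < d" by simp
    thus "\<beta>' j * (x j ^ q) ^ Suc m = P * (\<beta> j * (x j ^ q) ^ m)" by (rule key)
  qed
  have eq2: "P ^ N * (c * P ^ Suc m - P ^ k * (\<Sum>j<d. \<beta>' j * (x j ^ q) ^ Suc m)) = 0"
  proof -
    have "P ^ N * (c * P ^ Suc m - P ^ k * (\<Sum>j<d. \<beta>' j * (x j ^ q) ^ Suc m))
        = P * (P ^ N * (c * P ^ m - P ^ k * (\<Sum>j<d. \<beta> j * (x j ^ q) ^ m)))"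
      unfolding sum by (simp add: algebra_simps)
    also have "\<dots> = 0" unfolding eq by simp
    finally show ?thesis .
  qed
  define L' where "L' = M + int (d * Suc m) - int (d*k) - int (Suc m)"
  have bm2: "\<forall>j<d. \<beta>' j \<in> ideal_pow I' (nat L')"
  proof (intro allI impI)
    fix j assume j: "j < d"
    have "(\<Prod>i\<in>{..<d}-{j}. x i ^ q) \<in> ideal_pow I' (card ({..<d}-{j}))"
      by (rule prod_in_pow) (use xq in auto)
    moreover have "card ({..<d}-{j}) = d - 1" using j by simp
    ultimately have "(\<Prod>i\<in>{..<d}-{j}. x i ^ q) \<in> ideal_pow I' (d - 1)" by simp
    hence "\<beta>' j \<in> ideal_pow I' (nat L + (d - 1))"
      unfolding \<beta>'_def using bm j ideal_pow_mult by blast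
    moreover have "nat L' \<le> nat L + (d - 1)" using j unfolding L_def L'_def by (simp add: algebra_simps)
    ultimately show "\<beta>' j \<in> ideal_pow I' (nat L')" using ideal_pow_anti by blast
  qed
  show ?thesis unfolding Wz_def P_def[symmetric]
    by (rule exI[of _ \<beta>']) (use bm2 eq2 in \<open>simp only: L'_def\<close>)
qed

lemma W_m_add:
  assumes xq: "\<forall>i<d. x i ^ q \<in> I'" and W: "Wz I' x d q M k c m N"
  shows "Wz I' x d q M k c (m + r) N"
  by (induction r) (simp_all add: W W_m[OF xq])

lemma W_add:
  assumes xq: "\<forall>i<d. x i ^ q \<in> I'"
    and W1: "Wz I' x d q M k c1 m1 N1" and W2: "Wz I' x d q M k c2 m2 N2"
  shows "Wz I' x d q M k (c1 + c2) (m1 + m2) (N1 + N2)"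
proof -
  define P where "P = (\<Prod>j<d. x j ^ q)"
  define L where "L = M + int (d*(m1+m2)) - int (d*k) - int (m1+m2)"
  have A: "Wz I' x d q M k c1 (m1 + m2) (N1 + N2)"
    by (rule W_N, rule W_m_add[OF xq W1])
  have B: "Wz I' x d q M k c2 (m1 + m2) (N1 + N2)"
    using W_N[OF W_m_add[OF xq W2, of m1], of N1] by (simp add: add.commute)
  from A obtain \<beta>1 where b1: "\<forall>j<d. \<beta>1 j \<in> ideal_pow I' (nat L)" and
    e1: "P ^ (N1+N2) * (c1 * P ^ (m1+m2) - P ^ k * (\<Sum>j<d. \<beta>1 j * (x j ^ q) ^ (m1+m2))) = 0"
    unfolding Wz_def P_def L_def by blast
  from B obtain \<beta>2 where b2: "\<forall>j<d. \<beta>2 j \<in> ideal_pow I' (nat L)" and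
    e2: "P ^ (N1+N2) * (c2 * P ^ (m1+m2) - P ^ k * (\<Sum>j<d. \<beta>2 j * (x j ^ q) ^ (m1+m2))) = 0"
    unfolding Wz_def P_def L_def by blast
  have "P ^ (N1+N2) * ((c1 + c2) * P ^ (m1+m2) - P ^ k * (\<Sum>j<d. (\<beta>1 j + \<beta>2 j) * (x j ^ q) ^ (m1+m2)))
     = P ^ (N1+N2) * (c1 * P ^ (m1+m2) - P ^ k * (\<Sum>j<d. \<beta>1 j * (x j ^ q) ^ (m1+m2)))
     + P ^ (N1+N2) * (c2 * P ^ (m1+m2) - P ^ k * (\<Sum>j<d. \<beta>2 j * (x j ^ q) ^ (m1+m2)))"
    by (simp add: algebra_simps sum.distrib)
  also have "\<dots> = 0" unfolding e1 e2 by simp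
  finally have e: "P ^ (N1+N2) * ((c1 + c2) * P ^ (m1+m2) - P ^ k * (\<Sum>j<d. (\<beta>1 j + \<beta>2 j) * (x j ^ q) ^ (m1+m2))) = 0" .
  have b: "\<forall>j<d. \<beta>1 j + \<beta>2 j \<in> ideal_pow I' (nat L)"
    using b1 b2 ideal_add[OF ideal_pow_ideal] by blast
  show ?thesis unfolding Wz_def P_def[symmetric] L_def[symmetric]
    by (rule exI[of _ "\<lambda>j. \<beta>1 j + \<beta>2 j"]) (use b e in blast)
qed

lemma W_smult:
  assumes W: "Wz I' x d q M k c m N"
  shows "Wz I' x d q M k (r * c) m N"
proof -
  define P where "P = (\<Prod>j<d. x j ^ q)"
  define L where "L = M + int (d*m) - int (d*k) - int m"
  from W obtain \<beta> where bm: "\<forall>j<d. \<beta> j \<in> ideal_pow I' (nat L)" and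
    eq: "P ^ N * (c * P ^ m - P ^ k * (\<Sum>j<d. \<beta> j * (x j ^ q) ^ m)) = 0"
    unfolding Wz_def P_def L_def by blast
  have "P ^ N * (r * c * P ^ m - P ^ k * (\<Sum>j<d. (r * \<beta> j) * (x j ^ q) ^ m))
      = r * (P ^ N * (c * P ^ m - P ^ k * (\<Sum>j<d. \<beta> j * (x j ^ q) ^ m)))"
    by (simp add: algebra_simps sum_distrib_left)
  also have "\<dots> = 0" unfolding eq by simp
  finally have e: "P ^ N * (r * c * P ^ m - P ^ k * (\<Sum>j<d. (r * \<beta> j) * (x j ^ q) ^ m)) = 0" .
  have b: "\<forall>j<d. r * \<beta> j \<in> ideal_pow I' (nat L)"
    using bm ideal_multL[OF ideal_pow_ideal] by blast
  show ?thesis unfolding Wz_def P_def[symmetric] L_def[symmetric]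
    by (rule exI[of _ "\<lambda>j. r * \<beta> j"]) (use b e in blast)
qed

lemma W_zero: "Wz I' x d q M k 0 0 0"
  unfolding Wz_def
  by (rule exI[of _ "\<lambda>j. 0"]) (simp add: ideal_0[OF ideal_pow_ideal])

lemma Z_ideal:
  assumes xq: "\<forall>i<d. x i ^ q \<in> I'"
  shows "is_ideal {c. \<exists>m N. Wz I' x d q M k c m N}"
proof (rule is_idealI)
  show "0 \<in> {c. \<exists>m N. Wz I' x d q M k c m N}" using W_zero by blast
next
  fix a c assume "a \<in> {c. \<exists>m N. Wz I' x d q M k c m N}" "c \<in> {c. \<exists>m N. Wz I' x d q M k c m N}"
  then obtain m1 N1 m2 N2 where "Wz I' x d q M k a m1 N1" "Wz I' x d q M k c m2 N2" by blast
  from W_add[OF xq this] show "a + c \<in> {c. \<exists>m N. Wz I' x d q M k c m N}" by blast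
next
  fix r a assume "a \<in> {c. \<exists>m N. Wz I' x d q M k c m N}"
  then obtain m N where "Wz I' x d q M k a m N" by blast
  from W_smult[OF this] show "r * a \<in> {c. \<exists>m N. Wz I' x d q M k c m N}" by blast
qed

lemma W_frob:
  assumes pc: "prime CHAR('a::comm_ring_1)" and qd: "q = CHAR('a) ^ e"
    and W: "Wz I x d 1 M k (g::'a) m N"
  shows "Wz (frob_pow I q) x d q M k (g ^ q) m N"
proof -
  define P where "P = (\<Prod>j<d. x j)"
  define L where "L = M + int (d*m) - int (d*k) - int m"
  from W have "\<exists>\<beta>. (\<forall>j<d. \<beta> j \<in> ideal_pow I (nat L)) \<and>
    P ^ N * (g * P ^ m - P ^ k * (\<Sum>j<d. \<beta> j * x j ^ m)) = 0"
    unfolding Wz_def P_def L_def by simp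
  then obtain \<beta> where bm: "\<forall>j<d. \<beta> j \<in> ideal_pow I (nat L)" and
    eq: "P ^ N * (g * P ^ m - P ^ k * (\<Sum>j<d. \<beta> j * x j ^ m)) = 0"
    by blast
  have sw: "(a ^ n) ^ q = (a ^ q) ^ n" for a :: 'a and n
    by (simp only: power_mult[symmetric] mult.commute)
  have Pq: "P ^ q = (\<Prod>j<d. x j ^ q)" unfolding P_def by (rule prod_power_distrib)
  have "(P ^ N * (g * P ^ m - P ^ k * (\<Sum>j<d. \<beta> j * x j ^ m))) ^ q
     = (P ^ q) ^ N * (g ^ q * (P ^ q) ^ m - (P ^ q) ^ k * (\<Sum>j<d. \<beta> j ^ q * (x j ^ q) ^ m))"
    by (simp only: power_mult_distrib frob_diff[OF pc qd] frob_sum[OF pc qd] sw)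
  hence e: "(\<Prod>j<d. x j ^ q) ^ N * (g ^ q * (\<Prod>j<d. x j ^ q) ^ m - (\<Prod>j<d. x j ^ q) ^ k * (\<Sum>j<d. \<beta> j ^ q * (x j ^ q) ^ m)) = 0"
    unfolding eq Pq using q_pos[OF pc qd] by (simp add: power_0_left)
  have b: "\<forall>j<d. \<beta> j ^ q \<in> ideal_pow (frob_pow I q) (nat L)"
    using bm frob_pow_mem[OF pc qd] by blast
  show ?thesis unfolding Wz_def L_def[symmetric]
    by (rule exI[of _ "\<lambda>j. \<beta> j ^ q"]) (use b e in blast)
qed

theorem proposition3p4:
  fixes m I J :: "'a::comm_ring_1 set" and x :: "nat \<Rightarrow> 'a" and d p e :: nat
  assumes "prime p" and "CHAR('a) = p"
    and "local_ring m" and "krull_dim_eq TYPE('a) d"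
    and "primary_to m I"
    and "system_of_parameters m d x"
    and "J = ideal_gen (x ` {..<d})"
    and "is_minimal_reduction J I"
  shows "a_inv_top (ext_rees (frob_pow I (p ^ e))) (Jq_gens x (p ^ e)) d
           \<le> a_inv_top (ext_rees I) (Jq_gens x 1) d"
proof -
  define q where "q = p ^ e"
  have pc: "prime CHAR('a)" using assms(1,2) by simp
  have qd: "q = CHAR('a) ^ e" using assms(2) q_def by simp
  have JI: "J \<subseteq> I" using assms(8) unfolding is_minimal_reduction_def is_reduction_def by blast
  have xI: "x i \<in> I" if "i < d" for i
  proof -
    have "x i \<in> x ` {..<d}" using that by simp
    hence "x i \<in> J" unfolding assms(7) by (rule ideal_gen_sup[THEN subsetD])
    thus ?thesis using JI by blast
  qed
  have xq: "\<forall>i<d. x i ^ q \<in> frob_pow I q"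
  proof (intro allI impI)
    fix i assume "i < d"
    hence "x i ^ q \<in> {y ^ q | y. y \<in> I}" using xI by blast
    thus "x i ^ q \<in> frob_pow I q" unfolding frob_pow_def by (rule ideal_gen_sup[THEN subsetD])
  qed
  have comp: "cech_top_component_nonzero (ext_rees I) (Jq_gens x 1) d n"
    if L: "cech_top_component_nonzero (ext_rees (frob_pow I q)) (Jq_gens x q) d n" for n
  proof (rule ccontr)
    assume R: "\<not> cech_top_component_nonzero (ext_rees I) (Jq_gens x 1) d n"
    from L obtain k c where c: "lmon c (n + int (d * k)) \<in> ext_rees (frob_pow I q)"
      and ncz: "\<not> cech_top_class_zero (ext_rees (frob_pow I q)) (Jq_gens x q) d (lmon c (n + int (d * k))) k"
      unfolding cech_top_component_nonzero_def lmon_def[symmetric] by blast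
    define M where "M = n + int (d * k)"
    define Z where "Z = {c. \<exists>m N. Wz (frob_pow I q) x d q M k c m N}"
    have gens: "{g ^ q | g. g \<in> ideal_pow I (nat M)} \<subseteq> Z"
    proof
      fix z assume "z \<in> {g ^ q | g. g \<in> ideal_pow I (nat M)}"
      then obtain g where z: "z = g ^ q" and g: "g \<in> ideal_pow I (nat M)" by blast
      have gm: "lmon g M \<in> ext_rees I" using g by (simp add: lmon_ext_rees)
      have "cech_top_class_zero (ext_rees I) (Jq_gens x 1) d (lmon g M) k"
      proof (rule ccontr)
        assume "\<not> cech_top_class_zero (ext_rees I) (Jq_gens x 1) d (lmon g M) k"
        hence "cech_top_component_nonzero (ext_rees I) (Jq_gens x 1) d n"
          using gm unfolding cech_top_component_nonzero_def lmon_def[symmetric] M_def by blast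
        thus False using R by blast
      qed
      then obtain m N where "Wz I x d 1 M k g m N" using cz_to_W by blast
      hence "Wz (frob_pow I q) x d q M k (g ^ q) m N" by (rule W_frob[OF pc qd])
      thus "z \<in> Z" unfolding Z_def z by blast
    qed
    have "ideal_gen {g ^ q | g. g \<in> ideal_pow I (nat M)} \<subseteq> Z"
      unfolding Z_def by (rule ideal_gen_least[OF Z_ideal[OF xq]]) (use gens Z_def in simp)
    moreover have "c \<in> ideal_pow (frob_pow I q) (nat M)" using c by (simp add: lmon_ext_rees M_def)
    ultimately have "c \<in> Z" using gen_pow_frob by blast
    then obtain m N where "Wz (frob_pow I q) x d q M k c m N" unfolding Z_def by blast
    hence "cech_top_class_zero (ext_rees (frob_pow I q)) (Jq_gens x q) d (lmon c M) k" by (rule W_to_cz)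
    thus False using ncz M_def by simp
  qed
  have "{ereal (real_of_int n) | n. cech_top_component_nonzero (ext_rees (frob_pow I q)) (Jq_gens x q) d n}
      \<subseteq> {ereal (real_of_int n) | n. cech_top_component_nonzero (ext_rees I) (Jq_gens x 1) d n}"
    using comp by blast
  hence "a_inv_top (ext_rees (frob_pow I q)) (Jq_gens x q) d \<le> a_inv_top (ext_rees I) (Jq_gens x 1) d"
    unfolding a_inv_top_def by (rule Sup_subset_mono)
  thus ?thesis unfolding q_def .
qed

end
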